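(* Let $k\ge1$ be odd and, with $S,T,T_\omega=\begin{psmallmatrix}1&i\\0&1\end{psmallmatrix},L=\begin{psmallmatrix}i&0\\0&-i\end{psmallmatrix},U=TS,E=T_\omega SL$, let $W_{k,k}=\ker(\mathbf{1}+S)\cap\ker(\mathbf{1}-L)\cap\ker(\mathbf{1}+U+U^2)\cap\ker(\mathbf{1}+E+E^2)\subset V_{k,k}$. Let $\varepsilon_1=\begin{psmallmatrix}i&0\\0&1\end{psmallmatrix}$, so $P|\varepsilon_1=P(iz,\bar i\bar z)$. Then $W_{k,k}|\varepsilon_1=W_{k,k}$, and consequently $$W_{k,k}=W_{k,k}^{1}\oplus W_{k,k}^{-1}\oplus W_{k,k}^{i}\oplus W_{k,k}^{-i},$$ where $W_{k,k}^e=W_{k,k}\cap V_{k,k}^e$ and $V_{k,k}^e=\{P\in V_{k,k}:P(iz,\bar i\bar z)=eP(z,\bar z)\}$ for $e\in\{\pm1,\pm i\}$.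
   Context: $S=\begin{psmallmatrix}0&-1\\1&0\end{psmallmatrix}$, $T=\begin{psmallmatrix}1&1\\0&1\end{psmallmatrix}$. $V_{k,k}$ is the space of polynomials $\sum_{0\le i,j\le k}c_{ij}z^i\bar z^j$ over $\mathbb{C}$ with right action $(P|\gamma)(z,\bar z)=(cz+e)^k\overline{(cz+e)}^kP\!\left(\frac{az+b}{cz+e},\frac{\bar a\bar z+\bar b}{\bar c\bar z+\bar e}\right)$ for $\gamma=\begin{psmallmatrix}a&b\\c&e\end{psmallmatrix}$, extended linearly to the group ring; $\ker(X)=\{P:P|X=0\}$, and $W|\varepsilon_1=\{P|\varepsilon_1:P\in W\}$. *)

theory Defs
  imports Complex_Main
begin

text \<open>2x2 complex matrices (a b; c e) represented as quadruples (a, b, c, e).\<close>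
type_synonym mat2 = "complex \<times> complex \<times> complex \<times> complex"

fun mmul :: "mat2 \<Rightarrow> mat2 \<Rightarrow> mat2" where
  "mmul (a, b, c, e) (a', b', c', e') =
     (a*a' + b*c', a*b' + b*e', c*a' + e*c', c*b' + e*e')"

definition mI :: mat2 where "mI = (1, 0, 0, 1)"
definition mS :: mat2 where "mS = (0, -1, 1, 0)"
definition mT :: mat2 where "mT = (1, 1, 0, 1)"
definition mTw :: mat2 where "mTw = (1, \<i>, 0, 1)"
definition mL :: mat2 where "mL = (\<i>, 0, 0, -\<i>)"
definition mU :: mat2 where "mU = mmul mT mS"
definition mE :: mat2 where "mE = mmul (mmul mTw mS) mL"
definition eps1 :: mat2 where "eps1 = (\<i>, 0, 0, 1)"

text \<open>Elements of V_{k,k} are represented as functions P(z, w) of two complex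
  variables, w standing for the conjugate variable \<open>\<bar>z\<close>.\<close>
definition poly2 :: "nat \<Rightarrow> (nat \<Rightarrow> nat \<Rightarrow> complex) \<Rightarrow> complex \<Rightarrow> complex \<Rightarrow> complex" where
  "poly2 k c = (\<lambda>z w. \<Sum>i\<le>k. \<Sum>j\<le>k. c i j * z ^ i * w ^ j)"

definition Vkk :: "nat \<Rightarrow> (complex \<Rightarrow> complex \<Rightarrow> complex) set" where
  "Vkk k = {P. \<exists>c. P = poly2 k c}"

definition coeffs2 :: "nat \<Rightarrow> (complex \<Rightarrow> complex \<Rightarrow> complex) \<Rightarrow> nat \<Rightarrow> nat \<Rightarrow> complex" where
  "coeffs2 k P = (SOME c. P = poly2 k c)"

text \<open>Slash action: polynomial form of
  (cz+e)^k conj(cz+e)^k P((az+b)/(cz+e), conj((az+b)/(cz+e))).\<close>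
definition slash :: "nat \<Rightarrow> (complex \<Rightarrow> complex \<Rightarrow> complex) \<Rightarrow> mat2 \<Rightarrow> complex \<Rightarrow> complex \<Rightarrow> complex" where
  "slash k P g = (case g of (a, b, c, e) \<Rightarrow>
     (\<lambda>z w. \<Sum>i\<le>k. \<Sum>j\<le>k. coeffs2 k P i j
        * (a*z + b) ^ i * (c*z + e) ^ (k - i)
        * (cnj a * w + cnj b) ^ j * (cnj c * w + cnj e) ^ (k - j)))"

text \<open>Group ring elements as formal sums: lists of (coefficient, matrix).\<close>
definition slashR :: "nat \<Rightarrow> (complex \<Rightarrow> complex \<Rightarrow> complex) \<Rightarrow> (complex \<times> mat2) list
    \<Rightarrow> complex \<Rightarrow> complex \<Rightarrow> complex" where
  "slashR k P X = (\<lambda>z w. \<Sum>(n, g)\<leftarrow>X. n * slash k P g z w)"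

definition kerR :: "nat \<Rightarrow> (complex \<times> mat2) list \<Rightarrow> (complex \<Rightarrow> complex \<Rightarrow> complex) set" where
  "kerR k X = {P \<in> Vkk k. slashR k P X = (\<lambda>z w. 0)}"

definition Wkk :: "nat \<Rightarrow> (complex \<Rightarrow> complex \<Rightarrow> complex) set" where
  "Wkk k = kerR k [(1, mI), (1, mS)]
         \<inter> kerR k [(1, mI), (-1, mL)]
         \<inter> kerR k [(1, mI), (1, mU), (1, mmul mU mU)]
         \<inter> kerR k [(1, mI), (1, mE), (1, mmul mE mE)]"

definition Vkk_e :: "nat \<Rightarrow> complex \<Rightarrow> (complex \<Rightarrow> complex \<Rightarrow> complex) set" where
  "Vkk_e k e = {P \<in> Vkk k. \<forall>z w. P (\<i> * z) (cnj \<i> * w) = e * P z w}"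

definition Wkk_e :: "nat \<Rightarrow> complex \<Rightarrow> (complex \<Rightarrow> complex \<Rightarrow> complex) set" where
  "Wkk_e k e = Wkk k \<inter> Vkk_e k e"

end

theory Submission
  imports Defs "HOL-Computational_Algebra.Polynomial"
begin

lemma uni_cofin:
  fixes c :: "nat \<Rightarrow> complex"
  assumes "finite A" "\<And>x. x \<notin> A \<Longrightarrow> (\<Sum>i\<le>n. c i * x^i) = 0"
  shows "\<forall>i\<le>n. c i = 0"
proof -
  have "infinite (UNIV - A)"
    using assms(1) infinite_UNIV_char_0[where 'a=complex] by (simp add: Diff_infinite_finite)
  moreover have "UNIV - A \<subseteq> {x. (\<Sum>i\<le>n. c i * x^i) = 0}" using assms(2) by auto
  ultimately have "infinite {x. (\<Sum>i\<le>n. c i * x^i) = 0}" using finite_subset by blast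
  then show ?thesis using polyfun_finite_roots[where c=c and n=n] by auto
qed

lemma poly2_swap: "poly2 k c z w = (\<Sum>i\<le>k. (\<Sum>j\<le>k. c i j * w^j) * z^i)"
  unfolding poly2_def sum_distrib_right by (intro sum.cong refl) (simp add: mult_ac)

lemma poly2_zero_cofin:
  assumes "finite A" "finite B"
    and "\<And>z w. z \<notin> A \<Longrightarrow> w \<notin> B \<Longrightarrow> poly2 k c z w = 0"
    and "i \<le> k" "j \<le> k"
  shows "c i j = 0"
proof -
  have "\<forall>i\<le>k. (\<Sum>j\<le>k. c i j * w^j) = 0" if "w \<notin> B" for w
    apply (rule uni_cofin[OF assms(1)])
    using assms(3)[OF _ that] by (simp add: poly2_swap)
  then have "\<forall>j\<le>k. c i j = 0"
    using assms(4) by (intro uni_cofin[OF assms(2)]) auto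
  then show ?thesis using assms(5) by auto
qed

lemma poly2_diff: "poly2 k c z w - poly2 k d z w = poly2 k (\<lambda>i j. c i j - d i j) z w"
  unfolding poly2_def by (simp add: sum_subtractf algebra_simps)

lemma poly2_eq_cofin:
  assumes "finite A" "finite B"
    and "\<And>z w. z \<notin> A \<Longrightarrow> w \<notin> B \<Longrightarrow> poly2 k c z w = poly2 k d z w"
    and "i \<le> k" "j \<le> k"
  shows "c i j = d i j"
  using poly2_zero_cofin[OF assms(1,2), of k "\<lambda>i j. c i j - d i j" i j] assms(3-5)
  by (simp add: poly2_diff[symmetric])

lemma poly2_cong: "(\<And>i j. i \<le> k \<Longrightarrow> j \<le> k \<Longrightarrow> c i j = d i j) \<Longrightarrow> poly2 k c = poly2 k d"
  unfolding poly2_def by (intro ext sum.cong) auto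

lemma coeffs2_eq:
  assumes "P = poly2 k c" "i \<le> k" "j \<le> k"
  shows "coeffs2 k P i j = c i j"
proof -
  have "P = poly2 k (coeffs2 k P)" unfolding coeffs2_def using assms(1) by (rule someI[of "\<lambda>c. P = poly2 k c" c])
  then show ?thesis using poly2_eq_cofin[of "{}" "{}" k "coeffs2 k P" c i j] assms by auto
qed

lemma Vkk_poly2: "P \<in> Vkk k \<Longrightarrow> P = poly2 k (coeffs2 k P)"
  unfolding Vkk_def coeffs2_def by (metis (mono_tags, lifting) mem_Collect_eq someI_ex)

lemma V_eq_cofin:
  assumes "P \<in> Vkk k" "Q \<in> Vkk k" "finite A" "finite B"
    and "\<And>z w. z \<notin> A \<Longrightarrow> w \<notin> B \<Longrightarrow> P z w = Q z w"
  shows "P = Q"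
proof -
  obtain c d where c: "P = poly2 k c" and d: "Q = poly2 k d" using assms(1,2) unfolding Vkk_def by auto
  have *: "c i j = d i j" if "i \<le> k" "j \<le> k" for i j
    using poly2_eq_cofin[OF assms(3,4), of k c d i j] assms(5) c d that by auto
  show ?thesis unfolding c d by (rule poly2_cong) (rule *)
qed


fun jj :: "mat2 \<Rightarrow> complex \<Rightarrow> complex" where "jj (a,b,c,e) z = c*z+e"
fun mob :: "mat2 \<Rightarrow> complex \<Rightarrow> complex" where "mob (a,b,c,e) z = (a*z+b)/(c*z+e)"
fun cm :: "mat2 \<Rightarrow> mat2" where "cm (a,b,c,e) = (cnj a, cnj b, cnj c, cnj e)"
fun nz :: "mat2 \<Rightarrow> bool" where "nz (a,b,c,e) = (c \<noteq> 0 \<or> e \<noteq> 0)"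
fun smul :: "complex \<Rightarrow> mat2 \<Rightarrow> mat2" where "smul l (a,b,c,e) = (l*a, l*b, l*c, l*e)"

lemma pow_split:
  fixes u J :: complex
  assumes "J \<noteq> 0" "i \<le> k"
  shows "u^i * J^(k-i) = J^k * (u/J)^i"
proof -
  have "J^k = J^i * J^(k-i)" using assms(2) by (simp add: power_add[symmetric])
  then show ?thesis using assms(1) by (simp add: power_divide field_simps)
qed

lemma slash_rat:
  assumes "P \<in> Vkk k" "jj g z \<noteq> 0" "jj (cm g) w \<noteq> 0"
  shows "slash k P g z w = jj g z ^ k * jj (cm g) w ^ k * P (mob g z) (mob (cm g) w)"
proof -
  obtain a b c e where g: "g = (a,b,c,e)" by (cases g) auto
  define C where "C = coeffs2 k P"
  have P: "P x y = poly2 k C x y" for x y using Vkk_poly2[OF assms(1)] C_def by metis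
  have J: "c*z+e \<noteq> 0" "cnj c * w + cnj e \<noteq> 0" using assms(2,3) g by auto
  have "slash k P g z w = (\<Sum>i\<le>k. \<Sum>j\<le>k. C i j * ((a*z+b)^i * (c*z+e)^(k-i))
        * ((cnj a * w + cnj b)^j * (cnj c * w + cnj e)^(k-j)))"
    unfolding slash_def g C_def by (simp add: mult.assoc)
  also have "\<dots> = (\<Sum>i\<le>k. \<Sum>j\<le>k. C i j * ((c*z+e)^k * ((a*z+b)/(c*z+e))^i)
        * ((cnj c * w + cnj e)^k * ((cnj a * w + cnj b)/(cnj c * w + cnj e))^j))"
    using J by (intro sum.cong refl) (simp add: pow_split)
  also have "\<dots> = (c*z+e)^k * (cnj c * w + cnj e)^k * poly2 k C ((a*z+b)/(c*z+e)) ((cnj a * w + cnj b)/(cnj c * w + cnj e))"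
    unfolding poly2_def sum_distrib_left by (intro sum.cong refl) (simp add: mult_ac)
  finally show ?thesis using P g by simp
qed

lemma Vkk_zero: "(\<lambda>z w. 0) \<in> Vkk k"
  unfolding Vkk_def poly2_def by (rule CollectI, rule exI[of _ "\<lambda>i j. 0"]) simp

lemma Vkk_add: "P \<in> Vkk k \<Longrightarrow> Q \<in> Vkk k \<Longrightarrow> (\<lambda>z w. P z w + Q z w) \<in> Vkk k"
proof -
  assume "P \<in> Vkk k" "Q \<in> Vkk k"
  then obtain c d where "P = poly2 k c" "Q = poly2 k d" unfolding Vkk_def by auto
  then have "(\<lambda>z w. P z w + Q z w) = poly2 k (\<lambda>i j. c i j + d i j)"
    by (simp add: poly2_def sum.distrib algebra_simps)
  then show ?thesis unfolding Vkk_def by auto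
qed

lemma Vkk_smult: "P \<in> Vkk k \<Longrightarrow> (\<lambda>z w. a * P z w) \<in> Vkk k"
proof -
  assume "P \<in> Vkk k"
  then obtain c where "P = poly2 k c" unfolding Vkk_def by auto
  then have "(\<lambda>z w. a * P z w) = poly2 k (\<lambda>i j. a * c i j)"
    by (simp add: poly2_def sum_distrib_left algebra_simps)
  then show ?thesis unfolding Vkk_def by auto
qed

lemma Vkk_sum: "finite A \<Longrightarrow> (\<And>x. x \<in> A \<Longrightarrow> F x \<in> Vkk k) \<Longrightarrow> (\<lambda>z w. \<Sum>x\<in>A. F x z w) \<in> Vkk k"
proof (induction A rule: finite_induct)
  case empty then show ?case using Vkk_zero by simp
next
  case (insert x A)
  then show ?case using Vkk_add[of "F x" k "\<lambda>z w. \<Sum>x\<in>A. F x z w"] by simp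
qed

lemma poly_le: "degree (p::complex poly) \<le> k \<Longrightarrow> poly p z = (\<Sum>i\<le>k. coeff p i * z^i)"
proof -
  assume "degree p \<le> k"
  then have "p = (\<Sum>i\<le>k. monom (coeff p i) i)" by (simp add: poly_as_sum_of_monoms')
  then have "poly p z = poly (\<Sum>i\<le>k. monom (coeff p i) i) z" by simp
  also have "\<dots> = (\<Sum>i\<le>k. coeff p i * z^i)" by (simp add: poly_sum poly_monom)
  finally show ?thesis .
qed

lemma Vkk_prod: "degree p \<le> k \<Longrightarrow> degree q \<le> k \<Longrightarrow> (\<lambda>z w. poly p z * poly q w) \<in> Vkk k"
  unfolding Vkk_def
  by (rule CollectI, rule exI[of _ "\<lambda>i j. coeff p i * coeff q j"])
    (simp add: poly_le poly2_def sum_product mult_ac)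

lemma deg1: "degree [:b, a:] \<le> 1"
  using degree_pCons_le[of b "[:a:]"] by simp

lemma degpow: "degree ([:b, a:] ^ i) \<le> i"
proof -
  have "degree ([:b, a:] ^ i) \<le> degree [:b, a:] * i" by (rule degree_power_le)
  also have "\<dots> \<le> 1 * i" by (rule mult_right_mono[OF deg1]) simp
  finally show ?thesis by simp
qed

lemma deg_lin: "degree ([:b, a:] ^ i * [:e, c:] ^ (k - i)) \<le> k" if "i \<le> k"
proof -
  have "degree ([:b, a:] ^ i * [:e, c:] ^ (k - i)) \<le> degree ([:b, a:] ^ i) + degree ([:e, c:] ^ (k - i))"
    by (rule degree_mult_le)
  also have "\<dots> \<le> i + (k - i)" by (intro add_mono degpow)
  finally show ?thesis using that by simp
qed

lemma slash_Vkk: "slash k P g \<in> Vkk k"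
proof -
  obtain a b c e where g: "g = (a,b,c,e)" by (cases g) auto
  define C where "C = coeffs2 k P"
  define pp where "pp i = [:b, a:] ^ i * [:e, c:] ^ (k - i)" for i
  define qq where "qq j = [:cnj b, cnj a:] ^ j * [:cnj e, cnj c:] ^ (k - j)" for j
  have "slash k P g = (\<lambda>z w. \<Sum>i\<le>k. \<Sum>j\<le>k. C i j * (poly (pp i) z * poly (qq j) w))"
    unfolding slash_def g C_def pp_def qq_def by (intro ext sum.cong refl) (simp add: algebra_simps)
  also have "\<dots> \<in> Vkk k"
    apply (rule Vkk_sum, simp)
    apply (rule Vkk_sum, simp)
    apply (rule Vkk_smult)
    apply (rule Vkk_prod)
    using deg_lin by (auto simp: pp_def qq_def)
  finally show ?thesis .
qed


lemma nz_finite: "nz g \<Longrightarrow> finite {z. jj g z = 0}"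
proof -
  assume "nz g"
  obtain a b c e where g: "g = (a,b,c,e)" by (cases g) auto
  show ?thesis
  proof (cases "c = 0")
    case True
    then have "e \<noteq> 0" using \<open>nz g\<close> g by auto
    then show ?thesis using True g by simp
  next
    case False
    have "x = -e/c" if "jj g x = 0" for x
    proof -
      have "c*x = -e" using that g by (simp add: eq_neg_iff_add_eq_0)
      then have "x*c = -e" by (simp add: mult.commute)
      then show ?thesis using False by (simp add: field_simps)
    qed
    then have "{z. jj g z = 0} \<subseteq> {-e/c}" by auto
    then show ?thesis using finite_subset by blast
  qed
qed

lemma nz_cm: "nz g \<Longrightarrow> nz (cm g)"
  by (cases g) auto

lemma cm_mmul: "cm (mmul g h) = mmul (cm g) (cm h)"
  by (cases g, cases h) auto

lemma jj_mmul: "jj h z \<noteq> 0 \<Longrightarrow> jj (mmul g h) z = jj h z * jj g (mob h z)"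
  by (cases g, cases h) (auto simp: field_simps)

lemma frac_aux:
  fixes A J a b c d :: complex
  assumes "J \<noteq> 0"
  shows "(a*(A/J)+b)/(c*(A/J)+d) = (a*A+b*J)/(c*A+d*J)"
proof -
  have "a*(A/J)+b = (a*A+b*J)/J" "c*(A/J)+d = (c*A+d*J)/J" using assms by (simp_all add: field_simps)
  then show ?thesis using assms by simp
qed

lemma mob_mmul: "jj h z \<noteq> 0 \<Longrightarrow> mob (mmul g h) z = mob g (mob h z)"
proof -
  assume J: "jj h z \<noteq> 0"
  obtain a b c d where g: "g = (a,b,c,d)" by (cases g) auto
  obtain a' b' c' d' where h: "h = (a',b',c',d')" by (cases h) auto
  have J': "c'*z+d' \<noteq> 0" using J h by simp
  show ?thesis using frac_aux[OF J', of a "a'*z+b'" b c d] g h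
    by (simp add: algebra_simps)
qed

lemma slash_comp:
  assumes P: "P \<in> Vkk k" and h: "nz h" and gh: "nz (mmul g h)"
  shows "slash k (slash k P g) h = slash k P (mmul g h)"
proof (rule V_eq_cofin[OF slash_Vkk slash_Vkk])
  show "finite ({z. jj h z = 0} \<union> {z. jj (mmul g h) z = 0})"
    using nz_finite[OF h] nz_finite[OF gh] by simp
  show "finite ({w. jj (cm h) w = 0} \<union> {w. jj (cm (mmul g h)) w = 0})"
    using nz_finite[OF nz_cm[OF h]] nz_finite[OF nz_cm[OF gh]] by simp
  fix z w
  assume z: "z \<notin> {z. jj h z = 0} \<union> {z. jj (mmul g h) z = 0}"
    and w: "w \<notin> {w. jj (cm h) w = 0} \<union> {w. jj (cm (mmul g h)) w = 0}"
  have z1: "jj h z \<noteq> 0" and z2: "jj (mmul g h) z \<noteq> 0" using z by auto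
  have w1: "jj (cm h) w \<noteq> 0" and w2: "jj (mmul (cm g) (cm h)) w \<noteq> 0" using w by (auto simp: cm_mmul)
  have z3: "jj g (mob h z) \<noteq> 0" using z2 jj_mmul[OF z1, of g] by auto
  have w3: "jj (cm g) (mob (cm h) w) \<noteq> 0" using w2 jj_mmul[OF w1, of "cm g"] by auto
  have "slash k (slash k P g) h z w = jj h z ^ k * jj (cm h) w ^ k * slash k P g (mob h z) (mob (cm h) w)"
    by (rule slash_rat[OF slash_Vkk z1 w1])
  also have "\<dots> = jj h z ^ k * jj (cm h) w ^ k * (jj g (mob h z) ^ k * jj (cm g) (mob (cm h) w) ^ k
      * P (mob g (mob h z)) (mob (cm g) (mob (cm h) w)))"
    by (simp add: slash_rat[OF P z3 w3])
  also have "\<dots> = jj (mmul g h) z ^ k * jj (mmul (cm g) (cm h)) w ^ k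
      * P (mob (mmul g h) z) (mob (mmul (cm g) (cm h)) w)"
    by (simp add: jj_mmul[OF z1] jj_mmul[OF w1] mob_mmul[OF z1] mob_mmul[OF w1] power_mult_distrib mult_ac)
  also have "\<dots> = slash k P (mmul g h) z w"
    using slash_rat[OF P z2, of w] w2 by (simp add: cm_mmul)
  finally show "slash k (slash k P g) h z w = slash k P (mmul g h) z w" .
qed

lemma nz_smul: "l \<noteq> 0 \<Longrightarrow> nz g \<Longrightarrow> nz (smul l g)"
  by (cases g) auto

lemma slash_smul:
  assumes P: "P \<in> Vkk k" and g: "nz g" and l: "l * cnj l = 1"
  shows "slash k P (smul l g) = slash k P g"
proof -
  have l0: "l \<noteq> 0" using l by auto
  show ?thesis
  proof (rule V_eq_cofin[OF slash_Vkk slash_Vkk])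
    show "finite {z. jj g z = 0}" using nz_finite[OF g] .
    show "finite {z. jj (cm g) z = 0}" using nz_finite[OF nz_cm[OF g]] .
    fix z w assume z: "z \<notin> {z. jj g z = 0}" and w: "w \<notin> {z. jj (cm g) z = 0}"
    obtain a b c e where ge: "g = (a,b,c,e)" by (cases g) auto
    have j1: "jj (smul l g) z = l * jj g z" "jj (cm (smul l g)) w = cnj l * jj (cm g) w"
      using ge by (simp_all add: algebra_simps)
    have z1: "jj (smul l g) z \<noteq> 0" "jj g z \<noteq> 0" using z l0 j1 by auto
    have w1: "jj (cm (smul l g)) w \<noteq> 0" "jj (cm g) w \<noteq> 0" using w l0 j1 by auto
    have e1: "jj (smul l g) z ^ k * jj (cm (smul l g)) w ^ k = (l * cnj l)^k * (jj g z ^ k * jj (cm g) w ^ k)"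
      unfolding j1 by (simp add: power_mult_distrib mult_ac)
    have e2: "mob (smul l g) z = mob g z" "mob (cm (smul l g)) w = mob (cm g) w"
      using ge l0 z1 w1 by (auto simp: field_simps)
    show "slash k P (smul l g) z w = slash k P g z w"
      using slash_rat[OF P z1(1) w1(1)] slash_rat[OF P z1(2) w1(2)] e1 e2 l by simp
  qed
qed

lemma slash_add:
  assumes P: "P \<in> Vkk k" and Q: "Q \<in> Vkk k" and g: "nz g"
  shows "slash k (\<lambda>z w. P z w + Q z w) g = (\<lambda>z w. slash k P g z w + slash k Q g z w)"
proof (rule V_eq_cofin[OF slash_Vkk Vkk_add[OF slash_Vkk slash_Vkk]])
  show "finite {z. jj g z = 0}" using nz_finite[OF g] .
  show "finite {z. jj (cm g) z = 0}" using nz_finite[OF nz_cm[OF g]] .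
  fix z w assume z: "z \<notin> {z. jj g z = 0}" and w: "w \<notin> {z. jj (cm g) z = 0}"
  then show "slash k (\<lambda>z w. P z w + Q z w) g z w = slash k P g z w + slash k Q g z w"
    using slash_rat[OF P, of g z w] slash_rat[OF Q, of g z w] slash_rat[OF Vkk_add[OF P Q], of g z w]
    by (simp add: algebra_simps)
qed

lemma slash_scal:
  assumes P: "P \<in> Vkk k" and g: "nz g"
  shows "slash k (\<lambda>z w. a * P z w) g = (\<lambda>z w. a * slash k P g z w)"
proof (rule V_eq_cofin[OF slash_Vkk Vkk_smult[OF slash_Vkk]])
  show "finite {z. jj g z = 0}" using nz_finite[OF g] .
  show "finite {z. jj (cm g) z = 0}" using nz_finite[OF nz_cm[OF g]] .
  fix z w assume z: "z \<notin> {z. jj g z = 0}" and w: "w \<notin> {z. jj (cm g) z = 0}"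
  then show "slash k (\<lambda>z w. a * P z w) g z w = a * slash k P g z w"
    using slash_rat[OF P, of g z w] slash_rat[OF Vkk_smult[OF P], of g z w]
    by (simp add: algebra_simps)
qed

lemma slash_I: "P \<in> Vkk k \<Longrightarrow> slash k P mI = P"
  by (rule ext, rule ext) (simp add: slash_rat mI_def)

lemma slash_eps: "P \<in> Vkk k \<Longrightarrow> slash k P eps1 = (\<lambda>z w. P (\<i> * z) (cnj \<i> * w))"
  by (rule ext, rule ext) (simp add: slash_rat eps1_def)


definition mM :: mat2 where "mM = (1, 0, 0, \<i>)"

lemma W_iff: "P \<in> Wkk k \<longleftrightarrow> P \<in> Vkk k \<and> slash k P mS = (\<lambda>z w. - P z w) \<and> slash k P mL = P
   \<and> (\<forall>z w. P z w + slash k P mU z w + slash k P (mmul mU mU) z w = 0)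
   \<and> (\<forall>z w. P z w + slash k P mE z w + slash k P (mmul mE mE) z w = 0)"
proof (cases "P \<in> Vkk k")
  case True
  have a: "(\<lambda>z w. P z w + slash k P mS z w) = (\<lambda>z w. 0) \<longleftrightarrow> slash k P mS = (\<lambda>z w. - P z w)"
    by (auto simp: fun_eq_iff add_eq_0_iff)
  have b: "(\<lambda>z w. P z w - slash k P mL z w) = (\<lambda>z w. 0) \<longleftrightarrow> slash k P mL = P"
    by (auto simp: fun_eq_iff)
  show ?thesis using True a b
    unfolding Wkk_def kerR_def slashR_def
    by (simp add: slash_I fun_eq_iff add.assoc)
next
  case False
  then show ?thesis unfolding Wkk_def kerR_def by auto
qed

lemma mats:
  "nz mS" "nz mL" "nz mU" "nz mE" "nz eps1" "nz mM" "nz (mmul mU mU)" "nz (mmul mE mE)"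
  "nz (mmul eps1 mS)" "nz (mmul eps1 mL)" "nz (mmul eps1 mU)" "nz (mmul eps1 mE)"
  "nz (mmul eps1 (mmul mU mU))" "nz (mmul eps1 (mmul mE mE))"
  "nz (mmul mS mL)" "nz (mmul (mmul mS mL) eps1)" "nz (mmul mL eps1)" "nz (mmul mE eps1)"
  "nz (mmul (mmul mE mE) eps1)" "nz (mmul mL mU)" "nz (mmul (mmul mL mU) mM)"
  "nz (mmul mL (mmul mU mU))" "nz (mmul (mmul mL (mmul mU mU)) mM)" "nz (mmul mL mM)"
  by (simp_all add: mS_def mL_def mU_def mE_def eps1_def mM_def mT_def mTw_def)

lemma mat_eqs:
  "mmul eps1 mS = smul (-1) (mmul (mmul mS mL) eps1)"
  "mmul eps1 mL = mmul mL eps1"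
  "mmul eps1 mU = smul (-1) (mmul mE eps1)"
  "mmul eps1 (mmul mU mU) = mmul (mmul mE mE) eps1"
  "eps1 = mmul mL mM"
  "mmul eps1 mE = smul (-1) (mmul (mmul mL mU) mM)"
  "mmul eps1 (mmul mE mE) = mmul (mmul mL (mmul mU mU)) mM"
  by (simp_all add: mS_def mL_def mU_def mE_def eps1_def mM_def mT_def mTw_def)


lemma slash_neg:
  assumes "P \<in> Vkk k" "nz g"
  shows "slash k (\<lambda>z w. - P z w) g = (\<lambda>z w. - slash k P g z w)"
  using slash_scal[OF assms, of "-1"] by simp

lemma slash_M: "X \<in> Vkk k \<Longrightarrow> slash k X mM z w = X (-(\<i> * z)) (\<i> * w)"
proof -
  assume X: "X \<in> Vkk k"
  have "\<i> * -\<i> = 1" by simp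
  then have 1: "\<i>^k * (-\<i>)^k = 1" by (metis power_mult_distrib power_one)
  show ?thesis using slash_rat[OF X, of mM z w] 1 by (simp add: mM_def)
qed

lemma eps_pres:
  assumes W: "P \<in> Wkk k"
  shows "slash k P eps1 \<in> Wkk k"
proof -
  define Q where "Q = slash k P eps1"
  have P: "P \<in> Vkk k" and PS: "slash k P mS = (\<lambda>z w. - P z w)" and PL: "slash k P mL = P"
    and PU: "\<And>z w. P z w + slash k P mU z w + slash k P (mmul mU mU) z w = 0"
    and PE: "\<And>z w. P z w + slash k P mE z w + slash k P (mmul mE mE) z w = 0"
    using W unfolding W_iff by auto
  have QV: "Q \<in> Vkk k" unfolding Q_def by (rule slash_Vkk)
  have "slash k Q mS = slash k P (mmul eps1 mS)"
    unfolding Q_def using slash_comp[OF P mats(1) mats(9)] .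
  also have "\<dots> = slash k P (mmul (mmul mS mL) eps1)"
    unfolding mat_eqs(1) by (rule slash_smul[OF P mats(16)]) simp
  also have "\<dots> = slash k (slash k (slash k P mS) mL) eps1"
    using slash_comp[OF P mats(5) mats(16)] slash_comp[OF P mats(2) mats(15)] by simp
  also have "\<dots> = (\<lambda>z w. - Q z w)"
    unfolding PS slash_neg[OF P mats(2)] PL slash_neg[OF P mats(5)] Q_def ..
  finally have QS: "slash k Q mS = (\<lambda>z w. - Q z w)" .
  have "slash k Q mL = slash k P (mmul eps1 mL)"
    unfolding Q_def using slash_comp[OF P mats(2) mats(10)] .
  also have "\<dots> = slash k (slash k P mL) eps1"
    unfolding mat_eqs(2) using slash_comp[OF P mats(5) mats(17)] by simp
  finally have QL: "slash k Q mL = Q" unfolding PL Q_def .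
  have QU1: "slash k Q mU = slash k (slash k P mE) eps1"
    unfolding Q_def slash_comp[OF P mats(3) mats(11)] mat_eqs(3)
    using slash_smul[OF P mats(18), of "-1"] slash_comp[OF P mats(5) mats(18)] by simp
  have QU2: "slash k Q (mmul mU mU) = slash k (slash k P (mmul mE mE)) eps1"
    unfolding Q_def slash_comp[OF P mats(7) mats(13)] mat_eqs(4)
    using slash_comp[OF P mats(5) mats(19)] by simp
  have QU: "Q z w + slash k Q mU z w + slash k Q (mmul mU mU) z w = 0" for z w
  proof -
    have "Q z w + slash k Q mU z w + slash k Q (mmul mU mU) z w =
      P (\<i>*z) (cnj \<i>*w) + slash k P mE (\<i>*z) (cnj \<i>*w) + slash k P (mmul mE mE) (\<i>*z) (cnj \<i>*w)"
      unfolding QU1 QU2 slash_eps[OF slash_Vkk] unfolding Q_def slash_eps[OF P] ..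
    then show ?thesis using PE by simp
  qed
  have LM: "slash k X (mmul mL mM) = slash k X mM" if "slash k X mL = X" "X \<in> Vkk k" for X
    using slash_comp[OF that(2) mats(6) mats(24)] that(1) by simp
  have Q': "Q = slash k P mM" unfolding Q_def mat_eqs(5) using LM[OF PL P] .
  have QE1: "slash k Q mE = slash k (slash k P mU) mM"
    unfolding Q_def slash_comp[OF P mats(4) mats(12)] mat_eqs(6)
    using slash_smul[OF P mats(21), of "-1"] slash_comp[OF P mats(6) mats(21)]
      slash_comp[OF P mats(3) mats(20)] PL by simp
  have QE2: "slash k Q (mmul mE mE) = slash k (slash k P (mmul mU mU)) mM"
    unfolding Q_def slash_comp[OF P mats(8) mats(14)] mat_eqs(7)
    using slash_comp[OF P mats(6) mats(23)]
      slash_comp[OF P mats(7) mats(22)] PL by simp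
  have QE: "Q z w + slash k Q mE z w + slash k Q (mmul mE mE) z w = 0" for z w
  proof -
    have "Q z w + slash k Q mE z w + slash k Q (mmul mE mE) z w
      = P (-(\<i> * z)) (\<i> * w) + slash k P mU (-(\<i> * z)) (\<i> * w)
          + slash k P (mmul mU mU) (-(\<i> * z)) (\<i> * w)"
      unfolding QE1 QE2 slash_M[OF slash_Vkk] unfolding Q' slash_M[OF P] ..
    then show ?thesis using PU by simp
  qed
  show ?thesis unfolding Q_def[symmetric] W_iff using QV QS QL QU QE by auto
qed


lemma slash_lin:
  assumes "P \<in> Vkk k" "Q \<in> Vkk k" "nz g"
  shows "slash k (\<lambda>z w. a * P z w + Q z w) g = (\<lambda>z w. a * slash k P g z w + slash k Q g z w)"
  using slash_add[OF Vkk_smult[OF assms(1)] assms(2,3)] slash_scal[OF assms(1,3)] by simp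

lemma W_lin:
  assumes "P \<in> Wkk k" "Q \<in> Wkk k"
  shows "(\<lambda>z w. a * P z w + Q z w) \<in> Wkk k"
proof -
  have P: "P \<in> Vkk k" and PS: "slash k P mS = (\<lambda>z w. - P z w)" and PL: "slash k P mL = P"
    and PU: "\<And>z w. P z w + slash k P mU z w + slash k P (mmul mU mU) z w = 0"
    and PE: "\<And>z w. P z w + slash k P mE z w + slash k P (mmul mE mE) z w = 0"
    using assms(1) unfolding W_iff by auto
  have Q: "Q \<in> Vkk k" and QS: "slash k Q mS = (\<lambda>z w. - Q z w)" and QL: "slash k Q mL = Q"
    and QU: "\<And>z w. Q z w + slash k Q mU z w + slash k Q (mmul mU mU) z w = 0"
    and QE: "\<And>z w. Q z w + slash k Q mE z w + slash k Q (mmul mE mE) z w = 0"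
    using assms(2) unfolding W_iff by auto
  note L = slash_lin[OF P Q]
  have U: "a * P z w + Q z w + (a * slash k P mU z w + slash k Q mU z w) +
      (a * slash k P (mmul mU mU) z w + slash k Q (mmul mU mU) z w) = 0" for z w
  proof -
    have "a * P z w + Q z w + (a * slash k P mU z w + slash k Q mU z w) +
      (a * slash k P (mmul mU mU) z w + slash k Q (mmul mU mU) z w)
      = a * (P z w + slash k P mU z w + slash k P (mmul mU mU) z w)
        + (Q z w + slash k Q mU z w + slash k Q (mmul mU mU) z w)" by (simp add: algebra_simps)
    then show ?thesis using PU QU by simp
  qed
  have E: "a * P z w + Q z w + (a * slash k P mE z w + slash k Q mE z w) +
      (a * slash k P (mmul mE mE) z w + slash k Q (mmul mE mE) z w) = 0" for z w
  proof -
    have "a * P z w + Q z w + (a * slash k P mE z w + slash k Q mE z w) +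
      (a * slash k P (mmul mE mE) z w + slash k Q (mmul mE mE) z w)
      = a * (P z w + slash k P mE z w + slash k P (mmul mE mE) z w)
        + (Q z w + slash k Q mE z w + slash k Q (mmul mE mE) z w)" by (simp add: algebra_simps)
    then show ?thesis using PE QE by simp
  qed
  show ?thesis unfolding W_iff L[OF mats(1)] L[OF mats(2)] L[OF mats(3)] L[OF mats(4)]
      L[OF mats(7)] L[OF mats(8)] PS QS PL QL
    using Vkk_add[OF Vkk_smult[OF P] Q] U E
    by (simp add: algebra_simps)
qed

lemma W_scal:
  assumes "P \<in> Wkk k"
  shows "(\<lambda>z w. a * P z w) \<in> Wkk k"
proof -
  have "(\<lambda>z w. a * P z w) = (\<lambda>z w. (a - 1) * P z w + P z w)" by (simp add: algebra_simps)
  then show ?thesis using W_lin[OF assms assms, of "a - 1"] by simp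
qed


lemma inv_i: "inverse \<i> = -\<i>" "inverse (-\<i>) = \<i>"
  by (simp_all add: inverse_eq_iff_eq[symmetric] field_simps)

lemma Ve_pow:
  assumes "Q \<in> Vkk_e k e"
  shows "Q (\<i>*z) (-(\<i>*w)) = e * Q z w" "Q (-z) (-w) = e^2 * Q z w" "Q (-(\<i>*z)) (\<i>*w) = e^3 * Q z w"
proof -
  have h: "Q (\<i>*x) (cnj \<i>*y) = e * Q x y" for x y using assms unfolding Vkk_e_def by auto
  show 1: "Q (\<i>*z) (-(\<i>*w)) = e * Q z w" using h[of z w] by simp
  show 2: "Q (-z) (-w) = e^2 * Q z w" using h[of "\<i>*z" "cnj \<i>*w"] h[of z w] by (simp add: power2_eq_square)
  show "Q (-(\<i>*z)) (\<i>*w) = e^3 * Q z w" using h[of "-z" "-w"] 2 by (simp add: power3_eq_cube power2_eq_square)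
qed

theorem proposition5p2:
  fixes k :: nat
  assumes "odd k"
  shows "(\<lambda>P. slash k P eps1) ` Wkk k = Wkk k
     \<and> (\<forall>P \<in> Wkk k. \<exists>!(p1, p2, p3, p4).
           p1 \<in> Wkk_e k 1 \<and> p2 \<in> Wkk_e k (-1) \<and> p3 \<in> Wkk_e k \<i> \<and> p4 \<in> Wkk_e k (-\<i>)
           \<and> P = (\<lambda>z w. p1 z w + p2 z w + p3 z w + p4 z w))"
proof
  show "(\<lambda>P. slash k P eps1) ` Wkk k = Wkk k"
  proof
    show "(\<lambda>P. slash k P eps1) ` Wkk k \<subseteq> Wkk k" using eps_pres by auto
    show "Wkk k \<subseteq> (\<lambda>P. slash k P eps1) ` Wkk k"
    proof
      fix P assume P: "P \<in> Wkk k"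
      then have PV: "P \<in> Vkk k" unfolding W_iff by auto
      define A1 where "A1 = slash k P eps1"
      define A2 where "A2 = slash k A1 eps1"
      define Q where "Q = slash k A2 eps1"
      have "Q \<in> Wkk k" using eps_pres P by (simp add: Q_def A1_def A2_def)
      have a1: "A1 z w = P (\<i>*z) (-(\<i>*w))" for z w
        unfolding A1_def slash_eps[OF PV] by simp
      have a2: "A2 z w = P (-z) (-w)" for z w
        using slash_eps[OF slash_Vkk[of k P eps1]] unfolding A2_def A1_def[symmetric] by (simp add: a1)
      have a3: "Q z w = P (-(\<i>*z)) (\<i>*w)" for z w
        using slash_eps[OF slash_Vkk[of k A1 eps1]] unfolding Q_def A2_def[symmetric] by (simp add: a2)
      have QV: "Q \<in> Vkk k" unfolding Q_def by (rule slash_Vkk)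
      have "P = slash k Q eps1"
        unfolding slash_eps[OF QV] by (simp add: a3)
      moreover note \<open>Q \<in> Wkk k\<close>
      ultimately show "P \<in> (\<lambda>P. slash k P eps1) ` Wkk k" by (rule image_eqI)
    qed
  qed
  show "\<forall>P \<in> Wkk k. \<exists>!(p1, p2, p3, p4).
           p1 \<in> Wkk_e k 1 \<and> p2 \<in> Wkk_e k (-1) \<and> p3 \<in> Wkk_e k \<i> \<and> p4 \<in> Wkk_e k (-\<i>)
           \<and> P = (\<lambda>z w. p1 z w + p2 z w + p3 z w + p4 z w)"
  proof
    fix P assume P: "P \<in> Wkk k"
    then have PV: "P \<in> Vkk k" unfolding W_iff by auto
    define R1 where "R1 = slash k P eps1"
    define R2 where "R2 = slash k R1 eps1"
    define R3 where "R3 = slash k R2 eps1"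
    have R1W: "R1 \<in> Wkk k" using eps_pres P R1_def by simp
    have R2W: "R2 \<in> Wkk k" using eps_pres R1W R2_def by simp
    have R3W: "R3 \<in> Wkk k" using eps_pres R2W R3_def by simp
    have r1: "R1 z w = P (\<i>*z) (-(\<i>*w))" for z w
      unfolding R1_def slash_eps[OF PV] by simp
    have r2: "R2 z w = P (-z) (-w)" for z w
      using slash_eps[OF slash_Vkk[of k P eps1]] unfolding R2_def R1_def[symmetric] by (simp add: r1)
    have r3: "R3 z w = P (-(\<i>*z)) (\<i>*w)" for z w
      using slash_eps[OF slash_Vkk[of k R1 eps1]] unfolding R3_def R2_def[symmetric] by (simp add: r2)
    define pe where "pe e = (\<lambda>z w. (1/4) * P z w + ((1/4 * inverse e) * R1 z w
        + ((1/4 * inverse e^2) * R2 z w + (1/4 * inverse e^3) * R3 z w)))" for e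
    have peW: "pe e \<in> Wkk k" for e
      unfolding pe_def by (intro W_lin P R1W R2W W_scal R3W)
    have peV: "pe e \<in> Vkk k" for e using peW unfolding W_iff by auto
    have peE: "pe e (\<i>*z) (cnj \<i>*w) = e * pe e z w" if "e \<in> {1, -1, \<i>, -\<i>}" for e z w
      using that unfolding pe_def r1 r2 r3 by (auto simp: inv_i algebra_simps power2_eq_square power3_eq_cube)
    have pe_in: "pe e \<in> Wkk_e k e" if "e \<in> {1, -1, \<i>, -\<i>}" for e
      unfolding Wkk_e_def Vkk_e_def using peW peV peE[OF that] by auto
    have sum: "P = (\<lambda>z w. pe 1 z w + pe (-1) z w + pe \<i> z w + pe (-\<i>) z w)"
      unfolding pe_def r1 r2 r3 by (simp add: field_simps)
    show "\<exists>!(p1, p2, p3, p4).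
           p1 \<in> Wkk_e k 1 \<and> p2 \<in> Wkk_e k (-1) \<and> p3 \<in> Wkk_e k \<i> \<and> p4 \<in> Wkk_e k (-\<i>)
           \<and> P = (\<lambda>z w. p1 z w + p2 z w + p3 z w + p4 z w)"
    proof (rule ex1I[of _ "(pe 1, pe (-1), pe \<i>, pe (-\<i>))"])
      show "case (pe 1, pe (-1), pe \<i>, pe (-\<i>)) of (p1, p2, p3, p4) \<Rightarrow>
           p1 \<in> Wkk_e k 1 \<and> p2 \<in> Wkk_e k (-1) \<and> p3 \<in> Wkk_e k \<i> \<and> p4 \<in> Wkk_e k (-\<i>)
           \<and> P = (\<lambda>z w. p1 z w + p2 z w + p3 z w + p4 z w)"
        using pe_in sum by simp
    next
      fix x
      assume x: "case x of (p1, p2, p3, p4) \<Rightarrow>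
           p1 \<in> Wkk_e k 1 \<and> p2 \<in> Wkk_e k (-1) \<and> p3 \<in> Wkk_e k \<i> \<and> p4 \<in> Wkk_e k (-\<i>)
           \<and> P = (\<lambda>z w. p1 z w + p2 z w + p3 z w + p4 z w)"
      obtain q1 q2 q3 q4 where xq: "x = (q1, q2, q3, q4)" by (cases x) auto
      have h1: "q1 \<in> Vkk_e k 1" and h2: "q2 \<in> Vkk_e k (-1)" and h3: "q3 \<in> Vkk_e k \<i>"
        and h4: "q4 \<in> Vkk_e k (-\<i>)" and hP: "\<And>z w. P z w = q1 z w + q2 z w + q3 z w + q4 z w"
        using x unfolding xq Wkk_e_def by auto
      note V = Ve_pow[OF h1] Ve_pow[OF h2] Ve_pow[OF h3] Ve_pow[OF h4]
      have "q1 z w = pe 1 z w \<and> q2 z w = pe (-1) z w \<and> q3 z w = pe \<i> z w \<and> q4 z w = pe (-\<i>) z w" for z w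
        unfolding pe_def r1 r2 r3 hP V by (simp add: inv_i algebra_simps power2_eq_square power3_eq_cube)
      then show "x = (pe 1, pe (-1), pe \<i>, pe (-\<i>))" unfolding xq by (auto simp: fun_eq_iff)
    qed
  qed
qed

end
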